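(* Under the hypotheses (torsion-free $G$; $l:G\to\mathbb{Z}^n$ a $\delta$-regular $\delta$-hyperbolic length function with (A) $ht(\delta)=1$, (B) $l(g^m)<l(g)$ for some nonzero integer $m$ implies $ht(l(g)-l(g^m))=1$, (C) $l(g)>0$ for $g\neq1$), for every $k$ with $1\le k<n$ there is a family $\{h_i\mid i\in I\}\subseteq G_{k+1}\setminus G_k$ (not necessarily finite) such that, setting $C_i=G_k\cap h_iG_kh_i^{-1}$, $D_i=G_k\cap h_i^{-1}G_kh_i$ and $\phi_i:C_i\to D_i$, $\phi_i(c)=h_i^{-1}ch_i$, $$G_{k+1}\cong\langle G_k,\{t_i\mid i\in I\}\mid t_i^{-1}ct_i=\phi_i(c),\ c\in C_i,\ i\in I\rangle,$$ via the map that is the identity on $G_k$ and sends $t_i\mapsto h_i$.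
   Context: $\mathbb{Z}^n$ carries the right lexicographic order ($a<b$ iff $a_j<b_j$ for the largest $j$ with $a_j\ne b_j$); $ht(a)$ is the largest index $k$ with $a_k\ne0$, $ht(0)=0$. A length function satisfies $l(1)=0$, $l(g)\ge0$, $l(g^{-1})=l(g)$, $l(gh)\le l(g)+l(h)$; $c(g,h)=\tfrac12(l(g)+l(h)-l(g^{-1}h))$; $\delta$-hyperbolic: $c(f,g)\ge\min\{c(f,h),c(g,h)\}-\delta$ for all $f,g,h$; $\delta$-regular: for all $g,h$ there are $g_c,h_c,g_d,h_d$ with $l(g_c)=l(h_c)=c(g,h)$, $g=g_cg_d$, $h=h_ch_d$, $l(g)=l(g_c)+l(g_d)$, $l(h)=l(h_c)+l(h_d)$, $l(g_c^{-1}h_c)\le4\delta$. $G_k=\{g\in G\mid ht(l(g))\le k\}$. *)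

theory Defs
  imports "HOL-Algebra.Group" "HOL-Library.Function_Algebras"
begin

text \<open>Elements of Z^n are functions nat => int supported in {1..n}.\<close>

definition zvec :: "nat \<Rightarrow> (nat \<Rightarrow> int) set" where
  "zvec n = {a. \<forall>j. a j \<noteq> 0 \<longrightarrow> j \<in> {1..n}}"

definition rlex_less :: "(nat \<Rightarrow> int) \<Rightarrow> (nat \<Rightarrow> int) \<Rightarrow> bool" where
  "rlex_less a b = (\<exists>j. a j < b j \<and> (\<forall>i>j. a i = b i))"

definition rlex_le :: "(nat \<Rightarrow> int) \<Rightarrow> (nat \<Rightarrow> int) \<Rightarrow> bool" where
  "rlex_le a b = (a = b \<or> rlex_less a b)"

definition rlex_min :: "(nat \<Rightarrow> int) \<Rightarrow> (nat \<Rightarrow> int) \<Rightarrow> (nat \<Rightarrow> int)" where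
  "rlex_min a b = (if rlex_le a b then a else b)"

definition ht :: "(nat \<Rightarrow> int) \<Rightarrow> nat" where
  "ht a = (if a = (\<lambda>_. 0) then 0 else (GREATEST k. a k \<noteq> 0))"

text \<open>Twice the Gromov product: c2 g h = 2 c(g,h) = l g + l h - l(g^-1 h).\<close>
definition gprod2 :: "('g, 'b) monoid_scheme \<Rightarrow> ('g \<Rightarrow> nat \<Rightarrow> int) \<Rightarrow> 'g \<Rightarrow> 'g \<Rightarrow> nat \<Rightarrow> int" where
  "gprod2 G l g h = l g + l h - l (inv\<^bsub>G\<^esub> g \<otimes>\<^bsub>G\<^esub> h)"

definition length_function :: "('g, 'b) monoid_scheme \<Rightarrow> nat \<Rightarrow> ('g \<Rightarrow> nat \<Rightarrow> int) \<Rightarrow> bool" where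
  "length_function G n l \<longleftrightarrow>
     (\<forall>g\<in>carrier G. l g \<in> zvec n) \<and>
     l \<one>\<^bsub>G\<^esub> = (\<lambda>_. 0) \<and>
     (\<forall>g\<in>carrier G. rlex_le (\<lambda>_. 0) (l g)) \<and>
     (\<forall>g\<in>carrier G. l (inv\<^bsub>G\<^esub> g) = l g) \<and>
     (\<forall>g\<in>carrier G. \<forall>h\<in>carrier G. rlex_le (l (g \<otimes>\<^bsub>G\<^esub> h)) (l g + l h))"

text \<open>delta-hyperbolicity, multiplied through by 2 (c may be half-integral).\<close>
definition hyperbolic :: "('g, 'b) monoid_scheme \<Rightarrow> ('g \<Rightarrow> nat \<Rightarrow> int) \<Rightarrow> (nat \<Rightarrow> int) \<Rightarrow> bool" where
  "hyperbolic G l \<delta> \<longleftrightarrow>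
     (\<forall>f\<in>carrier G. \<forall>g\<in>carrier G. \<forall>h\<in>carrier G.
        rlex_le (rlex_min (gprod2 G l f h) (gprod2 G l g h) - 2 * \<delta>) (gprod2 G l f g))"

definition regular :: "('g, 'b) monoid_scheme \<Rightarrow> ('g \<Rightarrow> nat \<Rightarrow> int) \<Rightarrow> (nat \<Rightarrow> int) \<Rightarrow> bool" where
  "regular G l \<delta> \<longleftrightarrow>
     (\<forall>g\<in>carrier G. \<forall>h\<in>carrier G. \<exists>gc\<in>carrier G. \<exists>hc\<in>carrier G. \<exists>gd\<in>carrier G. \<exists>hd\<in>carrier G.
        2 * l gc = gprod2 G l g h \<and> l hc = l gc \<and>
        g = gc \<otimes>\<^bsub>G\<^esub> gd \<and> h = hc \<otimes>\<^bsub>G\<^esub> hd \<and>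
        l g = l gc + l gd \<and> l h = l hc + l hd \<and>
        rlex_le (l (inv\<^bsub>G\<^esub> gc \<otimes>\<^bsub>G\<^esub> hc)) (4 * \<delta>))"

definition Gk :: "('g, 'b) monoid_scheme \<Rightarrow> ('g \<Rightarrow> nat \<Rightarrow> int) \<Rightarrow> nat \<Rightarrow> 'g set" where
  "Gk G l k = {g \<in> carrier G. ht (l g) \<le> k}"

definition torsion_free :: "('g, 'b) monoid_scheme \<Rightarrow> bool" where
  "torsion_free G \<longleftrightarrow> (\<forall>g\<in>carrier G. \<forall>m::nat. m > 0 \<and> g [^]\<^bsub>G\<^esub> m = \<one>\<^bsub>G\<^esub> \<longrightarrow> g = \<one>\<^bsub>G\<^esub>)"

text \<open>Words for the presentation < A, t_i (i in I) | t_i^-1 c t_i = phi_i c, c in C_i >: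
  letters are elements of the base group A or stable letters t_i (True) / t_i^-1 (False).\<close>
datatype ('g, 'i) letter = Elem 'g | Stable 'i bool

definition hnn_word :: "'g set \<Rightarrow> 'i set \<Rightarrow> ('g, 'i) letter list \<Rightarrow> bool" where
  "hnn_word A I w \<longleftrightarrow> (\<forall>x\<in>set w. case x of Elem a \<Rightarrow> a \<in> A | Stable i b \<Rightarrow> i \<in> I)"

inductive hnn_cong :: "('g, 'b) monoid_scheme \<Rightarrow> 'g set \<Rightarrow> 'i set \<Rightarrow> ('i \<Rightarrow> 'g set) \<Rightarrow> ('i \<Rightarrow> 'g \<Rightarrow> 'g)
    \<Rightarrow> ('g, 'i) letter list \<Rightarrow> ('g, 'i) letter list \<Rightarrow> bool"
  for G A I C phi where
  refl: "hnn_cong G A I C phi w w"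
| sym: "hnn_cong G A I C phi u v \<Longrightarrow> hnn_cong G A I C phi v u"
| trans: "hnn_cong G A I C phi u v \<Longrightarrow> hnn_cong G A I C phi v w \<Longrightarrow> hnn_cong G A I C phi u w"
| ctx: "hnn_cong G A I C phi u v \<Longrightarrow> hnn_cong G A I C phi (x @ u @ y) (x @ v @ y)"
| mult: "a \<in> A \<Longrightarrow> b \<in> A \<Longrightarrow> hnn_cong G A I C phi [Elem a, Elem b] [Elem (a \<otimes>\<^bsub>G\<^esub> b)]"
| one: "hnn_cong G A I C phi [Elem \<one>\<^bsub>G\<^esub>] []"
| inv1: "i \<in> I \<Longrightarrow> hnn_cong G A I C phi [Stable i True, Stable i False] []"
| inv2: "i \<in> I \<Longrightarrow> hnn_cong G A I C phi [Stable i False, Stable i True] []"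
| rel: "i \<in> I \<Longrightarrow> c \<in> C i \<Longrightarrow> hnn_cong G A I C phi [Stable i False, Elem c, Stable i True] [Elem (phi i c)]"

fun letter_val :: "('g, 'b) monoid_scheme \<Rightarrow> ('i \<Rightarrow> 'g) \<Rightarrow> ('g, 'i) letter \<Rightarrow> 'g" where
  "letter_val G h (Elem a) = a"
| "letter_val G h (Stable i b) = (if b then h i else inv\<^bsub>G\<^esub> (h i))"

definition word_eval :: "('g, 'b) monoid_scheme \<Rightarrow> ('i \<Rightarrow> 'g) \<Rightarrow> ('g, 'i) letter list \<Rightarrow> 'g" where
  "word_eval G h w = foldr (\<lambda>x acc. letter_val G h x \<otimes>\<^bsub>G\<^esub> acc) w \<one>\<^bsub>G\<^esub>"

end

theory Submission imports Defs begin

definition supp_le :: "(nat \<Rightarrow> int) \<Rightarrow> nat \<Rightarrow> bool" where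
  "supp_le v p = (\<forall>j>p. v j = 0)"

lemma ht_le_iff:
  assumes "v \<in> zvec n" shows "ht v \<le> p \<longleftrightarrow> supp_le v p"
proof (cases "v = (\<lambda>_. 0)")
  case True then show ?thesis by (simp add: ht_def supp_le_def)
next
  case False
  then obtain j0 where j0: "v j0 \<noteq> 0" by auto
  have bnd: "\<And>y. v y \<noteq> 0 \<Longrightarrow> y \<le> n" using assms by (auto simp: zvec_def)
  have ht: "ht v = (GREATEST k. v k \<noteq> 0)" using False by (simp add: ht_def)
  have g1: "v (ht v) \<noteq> 0" unfolding ht by (rule GreatestI_nat[of _ j0 n]) (use j0 bnd in auto)
  have g2: "\<And>j. v j \<noteq> 0 \<Longrightarrow> j \<le> ht v" unfolding ht by (rule Greatest_le_nat[of _ _ n]) (use bnd in auto)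
  show ?thesis unfolding supp_le_def
  proof
    assume "ht v \<le> p" then show "\<forall>j>p. v j = 0" using g2 by force
  next
    assume "\<forall>j>p. v j = 0" then show "ht v \<le> p" using g1 by (meson not_le)
  qed
qed

lemma ht_ge:
  assumes "v \<in> zvec n" "v j \<noteq> 0" shows "j \<le> ht v"
proof (rule ccontr)
  assume "\<not> j \<le> ht v"
  then have "supp_le v (ht v)" using ht_le_iff[OF assms(1), of "ht v"] by simp
  then show False using assms(2) `\<not> j \<le> ht v` unfolding supp_le_def by simp
qed

lemma zvec_diff: "a \<in> zvec n \<Longrightarrow> b \<in> zvec n \<Longrightarrow> a - b \<in> zvec n"
  unfolding zvec_def
proof (clarify)
  fix j assume a: "\<forall>j. a j \<noteq> 0 \<longrightarrow> j \<in> {1..n}" and b: "\<forall>j. b j \<noteq> 0 \<longrightarrow> j \<in> {1..n}" and "(a - b) j \<noteq> 0"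
  then have "a j \<noteq> 0 \<or> b j \<noteq> 0" by auto
  then show "j \<in> {1..n}" using a b by blast
qed

lemma top_mono:
  assumes "rlex_le a b" "supp_le a p" "supp_le b p" shows "a p \<le> b p"
proof (cases "a = b")
  case True then show ?thesis by simp
next
  case False
  then obtain j where j: "a j < b j" "\<forall>i>j. a i = b i" using assms(1) unfolding rlex_le_def rlex_less_def by auto
  show ?thesis
  proof (cases j p rule: linorder_cases)
    case less then show ?thesis using j by simp
  next
    case equal then show ?thesis using j by simp
  next
    case greater then show ?thesis using j assms(2,3) unfolding supp_le_def by simp
  qed
qed

lemma supp_mono:
  assumes "rlex_le (\<lambda>_. 0) a" "rlex_le a b" "supp_le b p" shows "supp_le a p"
proof (rule ccontr)
  assume na: "\<not> supp_le a p"
  then obtain j where j: "j > p" "a j \<noteq> 0" unfolding supp_le_def by auto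
  from j have "a \<noteq> (\<lambda>_. 0)" by auto
  with assms(1) obtain j0 where j0: "0 < a j0" "\<forall>i>j0. a i = 0"
    unfolding rlex_le_def rlex_less_def by auto
  have "j \<le> j0" using j j0 by (meson not_le)
  then have "j0 > p" using j by simp
  show False
  proof (cases "a = b")
    case True then show ?thesis using j0 `j0 > p` assms(3) by (auto simp: supp_le_def)
  next
    case False
    then obtain j1 where j1: "a j1 < b j1" "\<forall>i>j1. a i = b i" using assms(2) unfolding rlex_le_def rlex_less_def by auto
    show False
    proof (cases j1 j0 rule: linorder_cases)
      case less then show ?thesis using j1 j0 `j0 > p` assms(3) by (simp add: supp_le_def)
    next
      case equal then show ?thesis using j1 j0 `j0 > p` assms(3) by (simp add: supp_le_def)
    next
      case greater then show ?thesis using j1 j0 `j0 > p` assms(3) by (simp add: supp_le_def)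
    qed
  qed
qed

lemma le_add: "rlex_le (\<lambda>_. 0) y \<Longrightarrow> rlex_le x (x + y)"
  unfolding rlex_le_def rlex_less_def by (auto simp: fun_eq_iff)

lemma min_top:
  assumes "supp_le a p" "supp_le b p" shows "rlex_min a b p = min (a p) (b p)"
proof (cases "rlex_le a b")
  case True then show ?thesis using top_mono[OF True assms] by (simp add: rlex_min_def)
next
  case False
  have "\<not> a p < b p"
  proof
    assume "a p < b p"
    then have "rlex_less a b" unfolding rlex_less_def using assms by (auto simp: supp_le_def)
    then show False using False by (simp add: rlex_le_def)
  qed
  then show ?thesis using False by (simp add: rlex_min_def)
qed


lemma supp_le_simps:
  "supp_le a p \<Longrightarrow> supp_le b p \<Longrightarrow> supp_le (a + b) p"
  "supp_le a p \<Longrightarrow> supp_le b p \<Longrightarrow> supp_le (a - b) p"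
  "supp_le a p \<Longrightarrow> supp_le (2 * a) p"
  "supp_le a p \<Longrightarrow> supp_le (4 * a) p"
  "supp_le (\<lambda>_. 0) p"
  "supp_le a q \<Longrightarrow> q \<le> p \<Longrightarrow> supp_le a p"
  by (auto simp: supp_le_def)

lemma supp_le_min: "supp_le a p \<Longrightarrow> supp_le b p \<Longrightarrow> supp_le (rlex_min a b) p"
  by (simp add: rlex_min_def)

locale P35 = group G for G :: "('g,'b) monoid_scheme" (structure) +
  fixes n :: nat and l :: "'g \<Rightarrow> nat \<Rightarrow> int" and \<delta> :: "nat \<Rightarrow> int" and k :: nat
  assumes lf: "length_function G n l" and hyp: "hyperbolic G l \<delta>" and reg: "regular G l \<delta>"
    and dz: "\<delta> \<in> zvec n" and A: "ht \<delta> = 1"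
    and B: "\<forall>g\<in>carrier G. \<forall>m::int. m \<noteq> 0 \<and> rlex_less (l (g [^] m)) (l g)
              \<longrightarrow> ht (l g - l (g [^] m)) = 1"
    and k1: "1 \<le> k" and kn: "k < n"
begin

lemma lcanc[simp]: "a \<in> carrier G \<Longrightarrow> y \<in> carrier G \<Longrightarrow> inv a \<otimes> (a \<otimes> y) = y"
  by (simp add: m_assoc[symmetric])
lemma lcanc2[simp]: "a \<in> carrier G \<Longrightarrow> y \<in> carrier G \<Longrightarrow> a \<otimes> (inv a \<otimes> y) = y"
  by (simp add: m_assoc[symmetric])

abbreviation H where "H \<equiv> Gk G l (Suc k)"
abbreviation K where "K \<equiv> Gk G l k"
definition L where "L g = l g (Suc k)"
definition P where "P x y = L x + L y - L (inv x \<otimes> y)"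

lemma lz: "g \<in> carrier G \<Longrightarrow> l g \<in> zvec n" using lf by (simp add: length_function_def)
lemma l1: "l \<one> = (\<lambda>_. 0)" using lf by (simp add: length_function_def)
lemma lnn: "g \<in> carrier G \<Longrightarrow> rlex_le (\<lambda>_. 0) (l g)" using lf by (simp add: length_function_def)
lemma linv: "g \<in> carrier G \<Longrightarrow> l (inv g) = l g" using lf by (simp add: length_function_def)
lemma ltri: "g \<in> carrier G \<Longrightarrow> h \<in> carrier G \<Longrightarrow> rlex_le (l (g \<otimes> h)) (l g + l h)"
  using lf by (simp add: length_function_def)

lemma Gk_iff: "g \<in> Gk G l m \<longleftrightarrow> g \<in> carrier G \<and> supp_le (l g) m"
  unfolding Gk_def using ht_le_iff lz by blast

lemma supp_Suc: "supp_le v k \<longleftrightarrow> supp_le v (Suc k) \<and> v (Suc k) = 0"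
  unfolding supp_le_def
proof
  assume h: "\<forall>j>k. v j = 0" then show "(\<forall>j>Suc k. v j = 0) \<and> v (Suc k) = 0" by auto
next
  assume h: "(\<forall>j>Suc k. v j = 0) \<and> v (Suc k) = 0"
  show "\<forall>j>k. v j = 0"
  proof (intro allI impI)
    fix j assume "k < j" then have "j = Suc k \<or> j > Suc k" by auto
    then show "v j = 0" using h by auto
  qed
qed

lemma K_iff: "g \<in> K \<longleftrightarrow> g \<in> H \<and> L g = 0"
  unfolding Gk_iff L_def using supp_Suc by blast

lemma H_carr: "g \<in> H \<Longrightarrow> g \<in> carrier G" by (simp add: Gk_iff)
lemma K_H: "g \<in> K \<Longrightarrow> g \<in> H" by (simp add: K_iff)
lemma K_carr: "g \<in> K \<Longrightarrow> g \<in> carrier G" by (simp add: Gk_iff)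

lemma L_nn: assumes "g \<in> H" shows "0 \<le> L g"
proof -
  have "rlex_le (\<lambda>_. 0) (l g)" using lnn assms by (simp add: Gk_iff)
  from top_mono[OF this, of "Suc k"] show ?thesis using assms by (simp add: Gk_iff supp_le_simps L_def)
qed

lemma H_mult: assumes "g \<in> H" "h \<in> H" shows "g \<otimes> h \<in> H"
proof -
  have c: "g \<in> carrier G" "h \<in> carrier G" using assms by (auto simp: Gk_iff)
  have "supp_le (l g + l h) (Suc k)" using assms by (simp add: Gk_iff supp_le_simps)
  then show ?thesis using supp_mono[OF lnn ltri] c by (simp add: Gk_iff)
qed

lemma L_mult: assumes "g \<in> H" "h \<in> H" shows "L (g \<otimes> h) \<le> L g + L h"
proof -
  have c: "g \<in> carrier G" "h \<in> carrier G" using assms by (auto simp: Gk_iff)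
  have "supp_le (l g + l h) (Suc k)" using assms by (simp add: Gk_iff supp_le_simps)
  moreover have "supp_le (l (g \<otimes> h)) (Suc k)" using H_mult[OF assms] by (simp add: Gk_iff)
  ultimately show ?thesis using top_mono[OF ltri[OF c]] by (simp add: L_def)
qed

lemma H_inv: "g \<in> H \<Longrightarrow> inv g \<in> H" by (simp add: Gk_iff linv)
lemma L_inv: "g \<in> H \<Longrightarrow> L (inv g) = L g" by (simp add: Gk_iff linv L_def)
lemma one_K: "\<one> \<in> K" by (simp add: Gk_iff l1 supp_le_simps)
lemma L_one: "L \<one> = 0" by (simp add: L_def l1)
lemma K_mult: "g \<in> K \<Longrightarrow> h \<in> K \<Longrightarrow> g \<otimes> h \<in> K"
  using H_mult L_mult L_nn by (smt (verit) K_iff)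
lemma K_inv: "g \<in> K \<Longrightarrow> inv g \<in> K" using H_inv L_inv K_iff by auto

lemma L_Kl: assumes "a \<in> K" "g \<in> H" shows "L (a \<otimes> g) = L g"
proof -
  have c: "a \<in> carrier G" "g \<in> carrier G" using assms by (auto simp: Gk_iff)
  have "L (a \<otimes> g) \<le> L g" using L_mult[OF K_H[OF assms(1)] assms(2)] assms(1) by (simp add: K_iff)
  moreover have "g = inv a \<otimes> (a \<otimes> g)" using c by (simp add: m_assoc[symmetric])
  then have "L g \<le> L (a \<otimes> g)" using L_mult[OF K_H[OF K_inv[OF assms(1)]] H_mult[OF K_H[OF assms(1)] assms(2)]]
      K_inv[OF assms(1)] by (simp add: K_iff)
  ultimately show ?thesis by simp
qed

lemma L_Kr: assumes "a \<in> K" "g \<in> H" shows "L (g \<otimes> a) = L g"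
proof -
  have c: "a \<in> carrier G" "g \<in> carrier G" using assms by (auto simp: Gk_iff)
  have "g \<otimes> a = inv (inv a \<otimes> inv g)" using c by (simp add: inv_mult_group)
  then show ?thesis using L_Kl[OF K_inv[OF assms(1)] H_inv[OF assms(2)]] L_inv H_mult H_inv K_H K_inv assms
    by (metis L_inv)
qed

lemma P_nn: "x \<in> H \<Longrightarrow> y \<in> H \<Longrightarrow> 0 \<le> P x y"
  unfolding P_def using L_mult[OF H_inv] L_inv by (smt (verit))

lemma P_le1: assumes "x \<in> H" "y \<in> H" shows "P x y \<le> 2 * L x"
proof -
  have c: "x \<in> carrier G" "y \<in> carrier G" using assms by (auto simp: Gk_iff)
  have "y = x \<otimes> (inv x \<otimes> y)" using c by (simp add: m_assoc[symmetric])
  then have "L y \<le> L x + L (inv x \<otimes> y)" using L_mult[OF assms(1) H_mult[OF H_inv[OF assms(1)] assms(2)]] by simp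
  then show ?thesis unfolding P_def by simp
qed

lemma P_le2: assumes "x \<in> H" "y \<in> H" shows "P x y \<le> 2 * L y"
proof -
  have c: "x \<in> carrier G" "y \<in> carrier G" using assms by (auto simp: Gk_iff)
  have "x = y \<otimes> inv (inv x \<otimes> y)" using c by (simp add: inv_mult_group m_assoc[symmetric])
  then have "L x \<le> L y + L (inv x \<otimes> y)" using L_mult[OF assms(2) H_inv[OF H_mult[OF H_inv[OF assms(1)] assms(2)]]]
     L_inv[OF H_mult[OF H_inv[OF assms(1)] assms(2)]] by simp
  then show ?thesis unfolding P_def by simp
qed

lemma P_Kl: assumes "a \<in> K" "x \<in> H" "y \<in> H" shows "P (a \<otimes> x) (a \<otimes> y) = P x y"
proof -
  have c: "a \<in> carrier G" "x \<in> carrier G" "y \<in> carrier G" using assms by (auto simp: Gk_iff)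
  have "inv (a \<otimes> x) \<otimes> (a \<otimes> y) = inv x \<otimes> y" using c by (simp add: inv_mult_group m_assoc)
  then show ?thesis unfolding P_def using L_Kl assms by simp
qed

lemma supp_delta: "supp_le \<delta> 1" using ht_le_iff[OF dz, of 1] A by simp

lemma hyp_top: assumes "f \<in> H" "g \<in> H" "h \<in> H" shows "min (P f h) (P g h) \<le> P f g"
proof -
  have sg: "\<And>x y. x \<in> H \<Longrightarrow> y \<in> H \<Longrightarrow> supp_le (gprod2 G l x y) (Suc k)"
    unfolding gprod2_def using H_mult H_inv by (simp add: Gk_iff supp_le_simps)
  have gP: "\<And>x y. gprod2 G l x y (Suc k) = P x y" by (simp add: gprod2_def P_def L_def)
  have sd: "supp_le (2 * \<delta>) (Suc k)" using supp_delta k1 supp_le_simps by simp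
  have d0: "\<delta> (Suc k) = 0" using supp_delta k1 by (simp add: supp_le_def)
  have "rlex_le (rlex_min (gprod2 G l f h) (gprod2 G l g h) - 2 * \<delta>) (gprod2 G l f g)"
    using hyp assms H_carr unfolding hyperbolic_def by blast
  from top_mono[OF this supp_le_simps(2)[OF supp_le_min[OF sg sg] sd] sg]
  show ?thesis using assms d0 by (simp add: min_top[OF sg sg] gP)
qed

lemma reg_top: assumes "g \<in> H" "h \<in> H"
  shows "\<exists>gc gd hc hd. gc \<in> H \<and> gd \<in> H \<and> hc \<in> H \<and> hd \<in> H \<and> g = gc \<otimes> gd \<and> h = hc \<otimes> hd \<and>
     L g = L gc + L gd \<and> L h = L hc + L hd \<and> 2 * L gc = P g h \<and> L hc = L gc \<and> inv gc \<otimes> hc \<in> K"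
proof -
  obtain gc hc gd hd where c: "gc \<in> carrier G" "hc \<in> carrier G" "gd \<in> carrier G" "hd \<in> carrier G"
    and e: "2 * l gc = gprod2 G l g h" "l hc = l gc" "g = gc \<otimes> gd" "h = hc \<otimes> hd"
     "l g = l gc + l gd" "l h = l hc + l hd" "rlex_le (l (inv gc \<otimes> hc)) (4 * \<delta>)"
  proof -
    have r: "\<forall>g\<in>carrier G. \<forall>h\<in>carrier G. \<exists>gc\<in>carrier G. \<exists>hc\<in>carrier G. \<exists>gd\<in>carrier G. \<exists>hd\<in>carrier G.
        2 * l gc = gprod2 G l g h \<and> l hc = l gc \<and>
        g = gc \<otimes> gd \<and> h = hc \<otimes> hd \<and>
        l g = l gc + l gd \<and> l h = l hc + l hd \<and>
        rlex_le (l (inv gc \<otimes> hc)) (4 * \<delta>)" using reg unfolding regular_def .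
    show ?thesis using r[rule_format, OF H_carr[OF assms(1)] H_carr[OF assms(2)]] that by blast
  qed
  have sg: "supp_le (l g) (Suc k)" "supp_le (l h) (Suc k)" using assms by (auto simp: Gk_iff)
  have "supp_le (l gc) (Suc k)" using supp_mono[OF lnn[OF c(1)] le_add[OF lnn[OF c(3)]]] e(5) sg by simp
  moreover have "supp_le (l gd) (Suc k)" using supp_mono[OF lnn[OF c(3)] le_add[OF lnn[OF c(1)]]] e(5) sg by (simp add: add.commute)
  moreover have "supp_le (l hc) (Suc k)" using supp_mono[OF lnn[OF c(2)] le_add[OF lnn[OF c(4)]]] e(6) sg by simp
  moreover have "supp_le (l hd) (Suc k)" using supp_mono[OF lnn[OF c(4)] le_add[OF lnn[OF c(2)]]] e(6) sg by (simp add: add.commute)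
  moreover have "supp_le (l (inv gc \<otimes> hc)) 1"
    using supp_mono[OF lnn e(7)] c supp_delta supp_le_simps by simp
  then have "supp_le (l (inv gc \<otimes> hc)) k" using k1 supp_le_simps(6) by blast
  moreover have "2 * L gc = P g h" using fun_cong[OF e(1), of "Suc k"] by (simp add: L_def P_def gprod2_def)
  moreover have "L g = L gc + L gd" "L h = L hc + L hd" "L hc = L gc" using e(2,5,6) by (simp_all add: L_def)
  ultimately show ?thesis
    apply -
    apply (rule exI[of _ gc], rule exI[of _ gd], rule exI[of _ hc], rule exI[of _ hd])
    using c e(3,4) by (auto simp: Gk_iff)
qed

lemma B_top: assumes "g \<in> H" "0 < L g" shows "g \<otimes> g \<notin> K"
proof
  assume gg: "g \<otimes> g \<in> K"
  have c: "g \<in> carrier G" using assms by (simp add: Gk_iff)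
  have pw: "g [^] (2::int) = g \<otimes> g"
    using int_pow_int[of G g 2] c by (simp add: numeral_2_eq_2)
  have s1: "supp_le (l (g \<otimes> g)) k" using gg by (simp add: Gk_iff)
  have s2: "supp_le (l g) (Suc k)" using assms by (simp add: Gk_iff)
  have "rlex_less (l (g \<otimes> g)) (l g)"
    unfolding rlex_less_def
  proof (intro exI conjI allI impI)
    show "l (g \<otimes> g) (Suc k) < l g (Suc k)" using s1 assms(2) by (simp add: supp_le_def L_def)
    fix i assume "Suc k < i" then show "l (g \<otimes> g) i = l g i" using s1 s2 by (simp add: supp_le_def)
  qed
  moreover have "\<forall>m::int. m \<noteq> 0 \<and> rlex_less (l (g [^] m)) (l g) \<longrightarrow> ht (l g - l (g [^] m)) = 1"
    using B c by blast
  ultimately have "ht (l g - l (g \<otimes> g)) = 1" using pw by (metis zero_neq_numeral)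
  moreover have "Suc k \<le> ht (l g - l (g \<otimes> g))"
    by (rule ht_ge[OF zvec_diff[OF lz lz]]) (use c s1 assms(2) in \<open>auto simp: supp_le_def L_def\<close>)
  ultimately show False using k1 by simp
qed


declare H_carr[simp] K_carr[simp] K_H[simp]

definition indec where
  "indec g \<longleftrightarrow> g \<in> H \<and> 0 < L g \<and> (\<forall>x\<in>H. \<forall>y\<in>H. g = x \<otimes> y \<and> L g = L x + L y \<longrightarrow> L x = 0 \<or> L y = 0)"

lemma indec_inv: assumes "indec g" shows "indec (inv g)"
  unfolding indec_def
proof (intro conjI ballI impI)
  have gH: "g \<in> H" using assms by (simp add: indec_def)
  show "inv g \<in> H" using H_inv gH .
  show "0 < L (inv g)" using assms L_inv gH by (simp add: indec_def)
  fix x y assume xy: "x \<in> H" "y \<in> H" "inv g = x \<otimes> y \<and> L (inv g) = L x + L y"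
  have "g = inv y \<otimes> inv x" using xy gH by (metis H_carr inv_inv inv_mult_group m_closed)
  moreover have "L g = L (inv y) + L (inv x)" using xy gH L_inv by simp
  ultimately have "L (inv y) = 0 \<or> L (inv x) = 0" using assms xy H_inv unfolding indec_def by blast
  then show "L x = 0 \<or> L y = 0" using L_inv xy by auto
qed

lemma indec_Kl: assumes "a \<in> K" "indec g" shows "indec (a \<otimes> g)"
  unfolding indec_def
proof (intro conjI ballI impI)
  have gH: "g \<in> H" using assms by (simp add: indec_def)
  show "a \<otimes> g \<in> H" using H_mult gH assms by simp
  show "0 < L (a \<otimes> g)" using assms L_Kl gH by (simp add: indec_def)
  fix x y assume xy: "x \<in> H" "y \<in> H" "a \<otimes> g = x \<otimes> y \<and> L (a \<otimes> g) = L x + L y"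
  have "g = (inv a \<otimes> x) \<otimes> y" using xy gH assms by (metis K_carr H_carr lcanc m_assoc inv_closed)
  moreover have "L g = L (inv a \<otimes> x) + L y" using xy gH L_Kl assms K_inv by simp
  moreover have "inv a \<otimes> x \<in> H" using H_mult K_H K_inv assms xy by simp
  ultimately have "L (inv a \<otimes> x) = 0 \<or> L y = 0" using assms xy unfolding indec_def by blast
  then show "L x = 0 \<or> L y = 0" using L_Kl K_inv assms xy by auto
qed

lemma indec_H: "indec g \<Longrightarrow> g \<in> H" by (simp add: indec_def)
lemma indec_pos: "indec g \<Longrightarrow> 0 < L g" by (simp add: indec_def)

definition relk where
  "relk g g' \<longleftrightarrow> (\<exists>a\<in>K. \<exists>b\<in>K. g' = a \<otimes> g \<otimes> b \<or> g' = a \<otimes> inv g \<otimes> b)"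

lemma relk_refl: "g \<in> carrier G \<Longrightarrow> relk g g"
  unfolding relk_def using one_K by force

lemma relk_sym: assumes "g \<in> carrier G" "relk g g'" shows "relk g' g"
proof -
  obtain a b where ab: "a \<in> K" "b \<in> K" "g' = a \<otimes> g \<otimes> b \<or> g' = a \<otimes> inv g \<otimes> b"
    using assms(2) unfolding relk_def by blast
  show ?thesis
  proof (cases "g' = a \<otimes> g \<otimes> b")
    case True
    then have "g = inv a \<otimes> g' \<otimes> inv b" using ab assms by (simp add: m_assoc)
    then show ?thesis unfolding relk_def using ab K_inv by blast
  next
    case False
    then have "g' = a \<otimes> inv g \<otimes> b" using ab by simp
    then have "g = b \<otimes> inv g' \<otimes> a" using ab assms by (simp add: m_assoc inv_mult_group)
    then show ?thesis unfolding relk_def using ab by blast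
  qed
qed

lemma relk_trans: assumes "g \<in> carrier G" "relk g g'" "relk g' g''" shows "relk g g''"
proof -
  obtain a b where ab: "a \<in> K" "b \<in> K" "g' = a \<otimes> g \<otimes> b \<or> g' = a \<otimes> inv g \<otimes> b"
    using assms(2) unfolding relk_def by blast
  obtain c d where cd: "c \<in> K" "d \<in> K" "g'' = c \<otimes> g' \<otimes> d \<or> g'' = c \<otimes> inv g' \<otimes> d"
    using assms(3) unfolding relk_def by blast
  have Kc: "a \<otimes> c \<in> K" if "a \<in> K" "c \<in> K" for a c using K_mult that .
  show ?thesis
  proof (cases "g' = a \<otimes> g \<otimes> b")
    case T1: True
    show ?thesis
    proof (cases "g'' = c \<otimes> g' \<otimes> d")
      case True
      then have "g'' = (c \<otimes> a) \<otimes> g \<otimes> (b \<otimes> d)" using T1 ab cd assms by (simp add: m_assoc)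
      then show ?thesis unfolding relk_def using ab cd K_mult by blast
    next
      case False
      then have "g'' = c \<otimes> inv g' \<otimes> d" using cd by simp
      then have "g'' = (c \<otimes> inv b) \<otimes> inv g \<otimes> (inv a \<otimes> d)" using T1 ab cd assms by (simp add: m_assoc inv_mult_group)
      then show ?thesis unfolding relk_def using ab cd K_mult K_inv by blast
    qed
  next
    case F1: False
    then have g': "g' = a \<otimes> inv g \<otimes> b" using ab by simp
    show ?thesis
    proof (cases "g'' = c \<otimes> g' \<otimes> d")
      case True
      then have "g'' = (c \<otimes> a) \<otimes> inv g \<otimes> (b \<otimes> d)" using g' ab cd assms by (simp add: m_assoc)
      then show ?thesis unfolding relk_def using ab cd K_mult by blast
    next
      case False
      then have "g'' = c \<otimes> inv g' \<otimes> d" using cd by simp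
      then have "g'' = (c \<otimes> inv b) \<otimes> g \<otimes> (inv a \<otimes> d)" using g' ab cd assms by (simp add: m_assoc inv_mult_group)
      then show ?thesis unfolding relk_def using ab cd K_mult K_inv by blast
    qed
  qed
qed

definition rep where "rep g = (SOME x. indec x \<and> relk g x)"
definition Iset where "Iset = rep ` {g. indec g}"

lemma rep_prop: assumes "indec g" shows "indec (rep g) \<and> relk g (rep g)"
  unfolding rep_def by (rule someI[of _ g]) (use assms relk_refl indec_H in simp)

lemma I_indec: "i \<in> Iset \<Longrightarrow> indec i" unfolding Iset_def using rep_prop by auto

lemma I_cover: assumes "indec g" shows "\<exists>i\<in>Iset. relk i g"
proof -
  have "rep g \<in> Iset" using assms by (simp add: Iset_def)
  moreover have "relk (rep g) g" using rep_prop[OF assms] relk_sym indec_H assms by simp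
  ultimately show ?thesis by blast
qed

lemma I_unique: assumes "i \<in> Iset" "j \<in> Iset" "relk i j" shows "i = j"
proof -
  obtain g g' where g: "indec g" "i = rep g" and g': "indec g'" "j = rep g'" using assms unfolding Iset_def by auto
  have c: "g \<in> carrier G" "g' \<in> carrier G" "i \<in> carrier G" "j \<in> carrier G"
    using g g' indec_H I_indec assms by auto
  have r1: "relk g i" using rep_prop[OF g(1)] g(2) by simp
  have r2: "relk j g'" using rep_prop[OF g'(1)] g'(2) relk_sym c by simp
  have gg': "relk g g'" using relk_trans[OF c(1) relk_trans[OF c(1) r1 assms(3)] r2] .
  have "(\<lambda>x. indec x \<and> relk g x) = (\<lambda>x. indec x \<and> relk g' x)"
  proof -
    have "relk g x \<longleftrightarrow> relk g' x" if "indec x" for x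
      using relk_trans[OF c(1) gg'] relk_trans[OF c(2) relk_sym[OF c(1) gg']] by blast
    then show ?thesis by (auto simp: fun_eq_iff)
  qed
  then show ?thesis using g g' unfolding rep_def by simp
qed


definition lv where "lv b i = (if b then i else inv i)"

abbreviation Cs where "Cs \<equiv> (\<lambda>i. K \<inter> {i \<otimes> x \<otimes> inv i |x. x \<in> K})"
abbreviation Ds where "Ds \<equiv> (\<lambda>i. K \<inter> {inv i \<otimes> x \<otimes> i |x. x \<in> K})"
abbreviation phi where "phi \<equiv> (\<lambda>i c. inv i \<otimes> c \<otimes> i)"

definition pinch :: "'g \<times> bool \<times> 'g \<Rightarrow> 'g \<times> bool \<times> 'g \<Rightarrow> bool" where
  "pinch x y = (fst y = fst x \<and> fst (snd x) \<noteq> fst (snd y) \<and>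
      (if fst (snd x) then snd (snd x) \<in> Ds (fst y) else snd (snd x) \<in> Cs (fst y)))"

lemma pinch_simp[simp]: "pinch (j, b', a) (i, b, c) = (i = j \<and> b' \<noteq> b \<and> (if b' then a \<in> Ds i else a \<in> Cs i))"
  by (simp add: pinch_def)

lemma lv_indec: "i \<in> Iset \<Longrightarrow> indec (lv b i)"
  unfolding lv_def using I_indec indec_inv by auto

lemma lv_H: "i \<in> Iset \<Longrightarrow> lv b i \<in> H" using lv_indec indec_H by blast

lemma local_gp:
  assumes iI: "i \<in> Iset" and jI: "j \<in> Iset" and aK: "a \<in> K" and np: "\<not> pinch (j, b', a) (i, b, c)"
  shows "P (inv (lv b' j)) (a \<otimes> lv b i) = 0"
proof (rule ccontr)
  define s0 where "s0 = lv b' j"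
  define s1 where "s1 = lv b i"
  define x where "x = inv s0"
  define y where "y = a \<otimes> s1"
  have ix: "indec x" unfolding x_def s0_def using lv_indec[OF jI] indec_inv by blast
  have iy: "indec y" unfolding y_def s1_def using lv_indec[OF iI] indec_Kl aK by blast
  have xH: "x \<in> H" and yH: "y \<in> H" using ix iy indec_H by auto
  assume "P (inv (lv b' j)) (a \<otimes> lv b i) \<noteq> 0"
  then have pos: "0 < P x y" using P_nn[OF xH yH] unfolding x_def y_def s0_def s1_def by simp
  obtain gc gd hc hd where r: "gc \<in> H" "gd \<in> H" "hc \<in> H" "hd \<in> H" "x = gc \<otimes> gd" "y = hc \<otimes> hd"
     "L x = L gc + L gd" "L y = L hc + L hd" "2 * L gc = P x y" "L hc = L gc" "inv gc \<otimes> hc \<in> K"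
    using reg_top[OF xH yH] by blast
  have "L gd = 0" using ix r pos unfolding indec_def by fastforce
  then have gdK: "gd \<in> K" using r K_iff by simp
  have "L hd = 0" using iy r pos unfolding indec_def by fastforce
  then have hdK: "hd \<in> K" using r K_iff by simp
  have "inv x \<otimes> y = inv gd \<otimes> (inv gc \<otimes> hc) \<otimes> hd" using r by (simp add: m_assoc inv_mult_group)
  then have "inv x \<otimes> y \<in> K" using K_mult K_inv gdK hdK r(11) by simp
  moreover have "inv x \<otimes> y = s0 \<otimes> a \<otimes> s1" unfolding x_def y_def s0_def s1_def
    using lv_H[OF jI, of b'] lv_H[OF iI, of b] aK by (simp add: m_assoc)
  ultimately have zK: "s0 \<otimes> a \<otimes> s1 \<in> K" by simp
  define z where "z = s0 \<otimes> a \<otimes> s1"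
  have iH: "i \<in> H" and jH: "j \<in> H" using iI jI I_indec indec_H by auto
  have ic: "i \<in> carrier G" and jc: "j \<in> carrier G" and ac: "a \<in> carrier G" using iH jH aK by auto
  have zc: "z \<in> carrier G" using zK z_def by simp
  have zKz: "z \<in> K" using zK z_def by simp
  have Lpos: "0 < L i" using I_indec[OF iI] indec_pos by blast
  show False
  proof (cases b)
    case bT: True
    show ?thesis
    proof (cases b')
      case True
      have "i = inv a \<otimes> inv j \<otimes> z" unfolding z_def s0_def s1_def lv_def using bT True ic jc ac by (simp add: m_assoc)
      then have "relk j i" unfolding relk_def using K_inv aK zK z_def by blast
      then have ij: "i = j" using I_unique[OF jI iI] by simp
      have "(i \<otimes> a) \<otimes> (i \<otimes> a) = z \<otimes> a" unfolding z_def s0_def s1_def lv_def using bT True ic ac ij by (simp add: m_assoc)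
      then have "(i \<otimes> a) \<otimes> (i \<otimes> a) \<in> K" using K_mult zK aK z_def by simp
      moreover have "0 < L (i \<otimes> a)" using L_Kr aK iH Lpos by simp
      ultimately show False using B_top H_mult iH aK by simp
    next
      case False
      have "i = inv a \<otimes> j \<otimes> z" unfolding z_def s0_def s1_def lv_def using bT False ic jc ac by (simp add: m_assoc)
      then have "relk j i" unfolding relk_def using K_inv aK zK z_def by blast
      then have ij: "i = j" using I_unique[OF jI iI] by simp
      have "a = i \<otimes> z \<otimes> inv i" unfolding z_def s0_def s1_def lv_def using bT False ic ac ij by (simp add: m_assoc)
      then have "a \<in> {i \<otimes> x \<otimes> inv i |x. x \<in> K}" using zKz by blast
      then have "a \<in> Cs i" using aK by blast
      then show False using np bT False ij by simp
    qed
  next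
    case bF: False
    show ?thesis
    proof (cases b')
      case True
      have "i = inv z \<otimes> j \<otimes> a" unfolding z_def s0_def s1_def lv_def using bF True ic jc ac by (simp add: m_assoc inv_mult_group)
      then have "relk j i" unfolding relk_def using K_inv aK zK z_def by blast
      then have ij: "i = j" using I_unique[OF jI iI] by simp
      have "a = inv i \<otimes> z \<otimes> i" unfolding z_def s0_def s1_def lv_def using bF True ic ac ij by (simp add: m_assoc)
      then have "a \<in> {inv i \<otimes> x \<otimes> i |x. x \<in> K}" using zKz by blast
      then have "a \<in> Ds i" using aK by blast
      then show False using np bF True ij by simp
    next
      case False
      have "i = inv z \<otimes> inv j \<otimes> a" unfolding z_def s0_def s1_def lv_def using bF False ic jc ac by (simp add: m_assoc inv_mult_group)
      then have "relk j i" unfolding relk_def using K_inv aK zK z_def by blast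
      then have ij: "i = j" using I_unique[OF jI iI] by simp
      have "(inv i \<otimes> a) \<otimes> (inv i \<otimes> a) = z \<otimes> a" unfolding z_def s0_def s1_def lv_def using bF False ic ac ij by (simp add: m_assoc)
      then have "(inv i \<otimes> a) \<otimes> (inv i \<otimes> a) \<in> K" using K_mult zK aK z_def by simp
      moreover have "0 < L (inv i \<otimes> a)" using L_Kr aK H_inv iH Lpos L_inv by simp
      ultimately show False using B_top H_mult H_inv iH aK by simp
    qed
  qed
qed

abbreviation cong where "cong u v \<equiv> hnn_cong G K Iset Cs phi u v"

definition sv :: "('g,'g) letter \<Rightarrow> 'g" where
  "sv x = (case x of Elem a \<Rightarrow> if a \<in> carrier G then a else \<one> | Stable i b \<Rightarrow> if i \<in> Iset then lv b i else \<one>)"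
definition seval :: "('g,'g) letter list \<Rightarrow> 'g" where
  "seval w = foldr (\<lambda>x acc. sv x \<otimes> acc) w \<one>"

lemma sv_carr[simp]: "sv x \<in> carrier G"
  using lv_H by (cases x) (auto simp: sv_def)

lemma seval_Nil[simp]: "seval [] = \<one>" by (simp add: seval_def)
lemma seval_Cons[simp]: "seval (x # w) = sv x \<otimes> seval w" by (simp add: seval_def)
lemma seval_carr[simp]: "seval w \<in> carrier G" by (induction w) auto
lemma seval_app: "seval (u @ v) = seval u \<otimes> seval v"
  by (induction u) (auto simp: m_assoc)

lemma sv_Elem[simp]: "a \<in> carrier G \<Longrightarrow> sv (Elem a) = a" by (simp add: sv_def)
lemma sv_Stable[simp]: "i \<in> Iset \<Longrightarrow> sv (Stable i b) = lv b i" by (simp add: sv_def)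
lemma I_carr: "i \<in> Iset \<Longrightarrow> i \<in> carrier G" using I_indec indec_H H_carr by blast

lemma cong_seval: "cong u v \<Longrightarrow> seval u = seval v"
proof (induction rule: hnn_cong.induct)
  case (ctx u v x y)
  then show ?case by (simp add: seval_app)
next
  case (mult a b)
  then show ?case by simp
next
  case one
  then show ?case by simp
next
  case (inv1 i)
  then show ?case using I_carr by (simp add: lv_def)
next
  case (inv2 i)
  then show ?case using I_carr by (simp add: lv_def)
next
  case (rel i c)
  then have "c \<in> carrier G" "i \<in> carrier G" using I_carr by auto
  then show ?case using rel by (simp add: lv_def m_assoc)
qed auto

lemma hnn_word_Nil[simp]: "hnn_word A I []" by (simp add: hnn_word_def)
lemma hnn_word_Cons[simp]: "hnn_word A I (x # w) \<longleftrightarrow> (case x of Elem a \<Rightarrow> a \<in> A | Stable i b \<Rightarrow> i \<in> I) \<and> hnn_word A I w"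
  by (simp add: hnn_word_def)
lemma hnn_word_app[simp]: "hnn_word A I (u @ w) \<longleftrightarrow> hnn_word A I u \<and> hnn_word A I w"
  by (auto simp: hnn_word_def)

lemma word_eval_eq: "hnn_word K Iset w \<Longrightarrow> word_eval G (\<lambda>x. x) w = seval w"
proof (induction w)
  case Nil then show ?case by (simp add: word_eval_def)
next
  case (Cons x w)
  then have "word_eval G (\<lambda>x. x) (x # w) = letter_val G (\<lambda>x. x) x \<otimes> seval w" by (simp add: word_eval_def)
  moreover have "letter_val G (\<lambda>x. x) x = sv x" using Cons.prems by (cases x) (auto simp: lv_def)
  ultimately show ?case by simp
qed

lemma seval_H: "hnn_word K Iset w \<Longrightarrow> seval w \<in> H"
proof (induction w)
  case Nil then show ?case using one_K by simp
next
  case (Cons x w)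
  have "sv x \<in> H" using Cons.prems lv_H by (cases x) auto
  then show ?case using Cons H_mult by simp
qed

lemma cong_app: assumes "cong u u'" "cong v v'" shows "cong (u @ v) (u' @ v')"
proof -
  have "cong ([] @ u @ v) ([] @ u' @ v)" using hnn_cong.ctx[OF assms(1), where x = "[]" and y = v] .
  moreover have "cong (u' @ v @ []) (u' @ v' @ [])" using hnn_cong.ctx[OF assms(2), where x = u' and y = "[]"] .
  ultimately show ?thesis using hnn_cong.trans by fastforce
qed

lemma cong_refl: "cong u u" by (rule hnn_cong.refl)
lemma cong_sym: "cong u v \<Longrightarrow> cong v u" by (rule hnn_cong.sym)
lemma cong_trans: "cong u v \<Longrightarrow> cong v w \<Longrightarrow> cong u w" by (rule hnn_cong.trans)


definition wps :: "('g \<times> bool \<times> 'g) list \<Rightarrow> ('g,'g) letter list" where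
  "wps ps = concat (map (\<lambda>(i,b,a). [Stable i b, Elem a]) ps)"

lemma wps_Nil[simp]: "wps [] = []" by (simp add: wps_def)
lemma wps_Cons[simp]: "wps ((i,b,a) # ps) = Stable i b # Elem a # wps ps" by (simp add: wps_def)

definition okp :: "'g \<times> bool \<times> 'g \<Rightarrow> bool" where "okp x \<longleftrightarrow> fst x \<in> Iset \<and> snd (snd x) \<in> K"

fun red :: "('g \<times> bool \<times> 'g) list \<Rightarrow> bool" where
  "red [] = True"
| "red [x] = okp x"
| "red (x # y # r) = (okp x \<and> \<not> pinch x y \<and> red (y # r))"

lemma red_tl: "red (x # r) \<Longrightarrow> red r" by (cases r) auto
lemma red_hd: "red (x # r) \<Longrightarrow> okp x" by (cases r) auto

lemma hnn_wps: "red ps \<Longrightarrow> hnn_word K Iset (wps ps)"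
proof (induction ps)
  case Nil then show ?case by simp
next
  case (Cons x ps)
  obtain i b a where x: "x = (i,b,a)" by (cases x) auto
  show ?case using Cons red_tl red_hd[OF Cons.prems] x by (simp add: okp_def)
qed

lemma pinch_cong: assumes "i \<in> Iset" "a \<in> K" "if b then a \<in> Ds i else a \<in> Cs i"
  shows "\<exists>e\<in>K. cong [Stable i b, Elem a, Stable i (\<not> b)] [Elem e]"
proof (cases b)
  case False
  then have aC: "a \<in> Cs i" using assms by simp
  then obtain x where x: "x \<in> K" "a = i \<otimes> x \<otimes> inv i" by blast
  have ic: "i \<in> carrier G" using I_carr assms by simp
  have "phi i a = x" using x ic by (simp add: m_assoc)
  then have "cong [Stable i False, Elem a, Stable i True] [Elem x]" using hnn_cong.rel[where G=G and A=K and I=Iset and C=Cs and phi=phi, OF assms(1) aC] by simp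
  then show ?thesis using False x by auto
next
  case True
  then have aD: "a \<in> Ds i" using assms by simp
  then obtain x where x: "x \<in> K" "a = inv i \<otimes> x \<otimes> i" by blast
  have ic: "i \<in> carrier G" using I_carr assms by simp
  have "x = i \<otimes> a \<otimes> inv i" using x ic by (simp add: m_assoc)
  then have "x \<in> {i \<otimes> y \<otimes> inv i |y. y \<in> K}" using assms(2) by blast
  then have xC: "x \<in> Cs i" using x by blast
  have "phi i x = a" using x ic by simp
  then have r: "cong [Stable i False, Elem x, Stable i True] [Elem a]" using hnn_cong.rel[where G=G and A=K and I=Iset and C=Cs and phi=phi, OF assms(1) xC] by simp
  have "cong ([Stable i True] @ [Elem a] @ [Stable i False]) ([Stable i True] @ [Stable i False, Elem x, Stable i True] @ [Stable i False])"
    using hnn_cong.ctx[OF cong_sym[OF r], where x = "[Stable i True]" and y = "[Stable i False]"] by simp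
  moreover have "cong ([Stable i True, Stable i False] @ [Elem x] @ [Stable i True, Stable i False]) ([] @ [Elem x] @ [])"
    using cong_app[OF hnn_cong.inv1[OF assms(1)] cong_app[OF cong_refl hnn_cong.inv1[OF assms(1)], of "[Elem x]"]] by simp
  ultimately have "cong [Stable i True, Elem a, Stable i False] [Elem x]" using cong_trans by fastforce
  then show ?thesis using True x by auto
qed

lemma normalize: "hnn_word K Iset w \<Longrightarrow> \<exists>a0 ps. a0 \<in> K \<and> red ps \<and> cong w (Elem a0 # wps ps)"
proof (induction w)
  case Nil
  have "cong [] [Elem \<one>]" using cong_sym[OF hnn_cong.one] .
  then show ?case using one_K by (intro exI[of _ \<one>] exI[of _ "[]"]) simp
next
  case (Cons x w)
  then obtain a0 ps where IH: "a0 \<in> K" "red ps" "cong w (Elem a0 # wps ps)" by auto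
  show ?case
  proof (cases x)
    case (Elem a)
    then have aK: "a \<in> K" using Cons.prems by simp
    have "cong (x # w) ([Elem a] @ (Elem a0 # wps ps))"
      using cong_app[OF cong_refl IH(3), of "[x]"] Elem by simp
    moreover have "cong ([Elem a, Elem a0] @ wps ps) ([Elem (a \<otimes> a0)] @ wps ps)"
      using cong_app[OF hnn_cong.mult[OF aK IH(1)] cong_refl] .
    ultimately have "cong (x # w) (Elem (a \<otimes> a0) # wps ps)" using cong_trans by fastforce
    then show ?thesis using K_mult[OF aK IH(1)] IH(2) by blast
  next
    case (Stable i b)
    then have iI: "i \<in> Iset" using Cons.prems by simp
    have c1: "cong (x # w) ([Stable i b] @ (Elem a0 # wps ps))"
      using cong_app[OF cong_refl IH(3), of "[x]"] Stable by simp
    show ?thesis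
    proof (cases "ps \<noteq> [] \<and> pinch (i, b, a0) (hd ps)")
      case True
      then obtain j b2 a1 ps' where ps: "ps = (j, b2, a1) # ps'" by (cases ps) auto
      have pj: "j = i" "b2 = (\<not> b)" "if b then a0 \<in> Ds i else a0 \<in> Cs i" using True ps by auto
      obtain e where e: "e \<in> K" "cong [Stable i b, Elem a0, Stable i (\<not> b)] [Elem e]"
        using pinch_cong[OF iI IH(1) pj(3)] by blast
      have "okp (j, b2, a1)" using red_hd IH(2) ps by blast
      then have a1K: "a1 \<in> K" by (simp add: okp_def)
      have eqw: "[Stable i b] @ (Elem a0 # wps ps) = [Stable i b, Elem a0, Stable i (\<not> b)] @ (Elem a1 # wps ps')"
        using ps pj by simp
      have d2: "cong ([Stable i b, Elem a0, Stable i (\<not> b)] @ (Elem a1 # wps ps')) ([Elem e, Elem a1] @ wps ps')"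
        using cong_app[OF e(2) cong_refl, of "Elem a1 # wps ps'"] by simp
      have d3: "cong ([Elem e, Elem a1] @ wps ps') (Elem (e \<otimes> a1) # wps ps')"
        using cong_app[OF hnn_cong.mult[OF e(1) a1K] cong_refl, of "wps ps'"] by simp
      have "cong (x # w) (Elem (e \<otimes> a1) # wps ps')"
        using cong_trans[OF cong_trans[OF c1[unfolded eqw] d2] d3] .
      moreover have "red ps'" using IH(2) ps red_tl by blast
      ultimately show ?thesis using K_mult[OF e(1) a1K] by blast
    next
      case False
      have "red ((i, b, a0) # ps)"
      proof (cases ps)
        case Nil then show ?thesis using iI IH(1) by (simp add: okp_def)
      next
        case (Cons y r) then show ?thesis using iI IH False by (simp add: okp_def)
      qed
      moreover have "cong ([Stable i b] @ (Elem a0 # wps ps)) ([Elem \<one>] @ ([Stable i b] @ (Elem a0 # wps ps)))"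
        using hnn_cong.ctx[OF cong_sym[OF hnn_cong.one], where x = "[]" and y = "[Stable i b] @ (Elem a0 # wps ps)"] by simp
      ultimately show ?thesis using c1 cong_trans one_K
        by (intro exI[of _ \<one>] exI[of _ "(i, b, a0) # ps"]) fastforce
    qed
  qed
qed

lemma key: "red ps \<Longrightarrow> ps \<noteq> [] \<Longrightarrow> seval (wps ps) \<in> H \<and>
   P (lv (fst (snd (hd ps))) (fst (hd ps))) (seval (wps ps)) = 2 * L (lv (fst (snd (hd ps))) (fst (hd ps)))"
proof (induction ps rule: red.induct)
  case 1 then show ?case by simp
next
  case (2 x)
  obtain i b a where x: "x = (i,b,a)" by (cases x) auto
  have iI: "i \<in> Iset" and aK: "a \<in> K" using 2 x by (auto simp: okp_def)
  have sH: "lv b i \<in> H" using lv_H[OF iI] .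
  have W: "seval (wps [x]) = lv b i \<otimes> a" using x iI aK by simp
  have "P (lv b i) (lv b i \<otimes> a) = 2 * L (lv b i)"
    unfolding P_def using L_Kr[OF aK sH] aK sH K_iff by (simp add: m_assoc[symmetric])
  then show ?case using W x H_mult[OF sH K_H[OF aK]] by simp
next
  case (3 x y r)
  obtain j b' a where x: "x = (j,b',a)" by (cases x) auto
  obtain i b c where y: "y = (i,b,c)" by (cases y) auto
  have ok: "okp x" "\<not> pinch x y" "red (y # r)" using 3 by auto
  have jI: "j \<in> Iset" and aK: "a \<in> K" using ok x by (auto simp: okp_def)
  have iI: "i \<in> Iset" using 3 y red_hd[OF ok(3)] by (simp add: okp_def)
  have IH: "seval (wps (y # r)) \<in> H" "P (lv b i) (seval (wps (y # r))) = 2 * L (lv b i)" using 3 ok y by auto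
  define W' where "W' = seval (wps (y # r))"
  define s0 where "s0 = lv b' j"
  define s1 where "s1 = lv b i"
  have s0H: "s0 \<in> H" and s1H: "s1 \<in> H" using lv_H jI iI s0_def s1_def by auto
  have W'H: "W' \<in> H" using IH W'_def by simp
  have aW'H: "a \<otimes> W' \<in> H" using H_mult aK W'H by simp
  have W: "seval (wps (x # y # r)) = s0 \<otimes> (a \<otimes> W')" using x aK jI by (simp add: W'_def s0_def)
  have loc: "P (inv s0) (a \<otimes> s1) = 0" using local_gp[OF iI jI aK, of b' b c] ok x y s0_def s1_def by simp
  have h: "min (P (inv s0) (a \<otimes> W')) (P (a \<otimes> s1) (a \<otimes> W')) \<le> P (inv s0) (a \<otimes> s1)"
    using hyp_top[OF H_inv[OF s0H] H_mult[OF K_H[OF aK] s1H] aW'H] .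
  have "P (a \<otimes> s1) (a \<otimes> W') = 2 * L s1" using P_Kl[OF aK s1H W'H] IH W'_def s1_def by simp
  moreover have "0 < L s1" using lv_indec[OF iI] indec_pos s1_def by simp
  ultimately have "P (inv s0) (a \<otimes> W') \<le> 0" using h loc by simp
  then have "P (inv s0) (a \<otimes> W') = 0" using P_nn[OF H_inv[OF s0H] aW'H] by simp
  then have eq: "L (s0 \<otimes> (a \<otimes> W')) = L s0 + L (a \<otimes> W')" unfolding P_def using L_inv[OF s0H] s0H by simp
  have "P s0 (s0 \<otimes> (a \<otimes> W')) = 2 * L s0" unfolding P_def using eq s0H aW'H by simp
  then show ?case using W x H_mult[OF s0H aW'H] s0_def by simp
qed

lemma red_ne_eval: assumes "red ps" "ps \<noteq> []" "a0 \<in> K" shows "seval (Elem a0 # wps ps) \<noteq> \<one>"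
proof
  assume e: "seval (Elem a0 # wps ps) = \<one>"
  define s where "s = lv (fst (snd (hd ps))) (fst (hd ps))"
  have k: "seval (wps ps) \<in> H" "P s (seval (wps ps)) = 2 * L s" using key[OF assms(1,2)] s_def by auto
  have "hd ps \<in> set ps" using assms(2) by simp
  then have "okp (hd ps)" using assms(1,2) red_hd by (cases ps) auto
  then have sH: "s \<in> H" and sp: "0 < L s" using lv_H lv_indec indec_pos s_def by (auto simp: okp_def)
  have "2 * L s \<le> 2 * L (seval (wps ps))" using P_le2[OF sH k(1)] k(2) by simp
  then have pos: "0 < L (seval (wps ps))" using sp by simp
  have "a0 \<otimes> seval (wps ps) = \<one>" using e assms(3) by simp
  then have "seval (wps ps) = inv a0" using assms(3) by (metis K_carr inv_equality l_inv seval_carr inv_inv inv_closed)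
  then have "seval (wps ps) \<in> K" using K_inv assms(3) by simp
  then show False using pos K_iff by simp
qed

fun winv :: "('g,'g) letter list \<Rightarrow> ('g,'g) letter list" where
  "winv [] = []"
| "winv (Elem a # w) = winv w @ [Elem (inv a)]"
| "winv (Stable i b # w) = winv w @ [Stable i (\<not> b)]"

lemma hnn_winv: "hnn_word K Iset w \<Longrightarrow> hnn_word K Iset (winv w)"
  by (induction w rule: winv.induct) (auto simp: K_inv)

lemma seval_winv: "hnn_word K Iset w \<Longrightarrow> seval (winv w) = inv (seval w)"
proof (induction w rule: winv.induct)
  case 1 then show ?case by simp
next
  case (2 a w)
  then have "a \<in> carrier G" by simp
  then show ?case using 2 by (simp add: seval_app inv_mult_group)
next
  case (3 i b w)
  then have iI: "i \<in> Iset" by simp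
  have "lv (\<not> b) i = inv (lv b i)" using I_carr[OF iI] by (simp add: lv_def)
  then show ?case using 3 iI by (simp add: seval_app inv_mult_group lv_H)
qed

lemma winv_cong: "hnn_word K Iset w \<Longrightarrow> cong (winv w @ w) []"
proof (induction w rule: winv.induct)
  case 1 then show ?case by (simp add: cong_refl)
next
  case (2 a w)
  then have aK: "a \<in> K" by simp
  have "cong [Elem (inv a), Elem a] [Elem \<one>]" using hnn_cong.mult[where G=G and I=Iset and C=Cs and phi=phi, OF K_inv[OF aK] aK] aK by simp
  then have p: "cong [Elem (inv a), Elem a] []" using hnn_cong.one cong_trans by blast
  have "cong (winv w @ [Elem (inv a), Elem a] @ w) (winv w @ [] @ w)" using hnn_cong.ctx[OF p] .
  then show ?case using 2 cong_trans by fastforce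
next
  case (3 i b w)
  then have iI: "i \<in> Iset" by simp
  have p: "cong [Stable i (\<not> b), Stable i b] []"
    using hnn_cong.inv1[OF iI] hnn_cong.inv2[OF iI] by (cases b) auto
  have "cong (winv w @ [Stable i (\<not> b), Stable i b] @ w) (winv w @ [] @ w)" using hnn_cong.ctx[OF p] .
  then show ?case using 3 cong_trans by fastforce
qed

lemma eq_cong: assumes "hnn_word K Iset u" "hnn_word K Iset v" "seval u = seval v" shows "cong u v"
proof -
  define w where "w = u @ winv v"
  have hw: "hnn_word K Iset w" using assms hnn_winv w_def by simp
  have ew: "seval w = \<one>" using assms seval_winv w_def by (simp add: seval_app)
  obtain a0 ps where n: "a0 \<in> K" "red ps" "cong w (Elem a0 # wps ps)" using normalize[OF hw] by blast
  have e2: "seval (Elem a0 # wps ps) = \<one>" using cong_seval[OF n(3)] ew by simp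
  have "ps = []" using red_ne_eval[OF n(2) _ n(1)] e2 by blast
  then have "a0 = \<one>" using e2 n(1) by simp
  then have "cong w [Elem \<one>]" using n `ps = []` by simp
  then have cw: "cong w []" using hnn_cong.one cong_trans by blast
  have c1: "cong (u @ []) (u @ (winv v @ v))" using cong_app[OF cong_refl cong_sym[OF winv_cong[OF assms(2)]]] .
  have c2: "cong (w @ v) ([] @ v)" using cong_app[OF cw cong_refl] .
  have c1': "cong u ((u @ winv v) @ v)" using c1 by simp
  have c2': "cong ((u @ winv v) @ v) v" using c2 w_def by simp
  show ?thesis using cong_trans[OF c1' c2'] .
qed

lemma surj_aux: "\<forall>g. g \<in> H \<and> nat (L g) = m \<longrightarrow> (\<exists>w. hnn_word K Iset w \<and> seval w = g)"
proof (induction m rule: less_induct)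
  case (less m)
  show ?case
  proof (intro allI impI)
    fix g assume g: "g \<in> H \<and> nat (L g) = m"
    then have gH: "g \<in> H" by simp
    show "\<exists>w. hnn_word K Iset w \<and> seval w = g"
    proof (cases "L g = 0")
      case True
      then have "g \<in> K" using K_iff gH by simp
      then show ?thesis by (intro exI[of _ "[Elem g]"]) simp
    next
      case False
      then have gp: "0 < L g" using L_nn[OF gH] by simp
      show ?thesis
      proof (cases "indec g")
        case True
        obtain i where iI: "i \<in> Iset" and r: "relk i g" using I_cover[OF True] by blast
        obtain a b where ab: "a \<in> K" "b \<in> K" "g = a \<otimes> i \<otimes> b \<or> g = a \<otimes> inv i \<otimes> b"
          using r unfolding relk_def by blast
        have ic: "i \<in> carrier G" using I_carr iI .
        obtain c where "g = a \<otimes> lv c i \<otimes> b" using ab(3) unfolding lv_def by (metis (full_types))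
        then have "seval [Elem a, Stable i c, Elem b] = g" using ab iI ic lv_H by (simp add: m_assoc)
        moreover have "hnn_word K Iset [Elem a, Stable i c, Elem b]" using ab iI by simp
        ultimately show ?thesis by blast
      next
        case False
        then obtain x y where xy: "x \<in> H" "y \<in> H" "g = x \<otimes> y" "L g = L x + L y" "L x \<noteq> 0" "L y \<noteq> 0"
          using gH gp unfolding indec_def by blast
        have "0 < L x" "0 < L y" using xy L_nn by (auto simp: order_le_less)
        then have "nat (L x) < m" "nat (L y) < m" using xy g by auto
        then obtain wx wy where "hnn_word K Iset wx" "seval wx = x" "hnn_word K Iset wy" "seval wy = y"
          using less xy by blast
        then show ?thesis using xy by (intro exI[of _ "wx @ wy"]) (simp add: seval_app)
      qed
    qed
  qed
qed

lemma main1: "Iset \<subseteq> H - K"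
  using I_indec indec_H indec_pos K_iff by fastforce

lemma main2: "hnn_word K Iset w \<Longrightarrow> word_eval G (\<lambda>x. x) w \<in> H"
  using word_eval_eq seval_H by simp

lemma main3: "g \<in> H \<Longrightarrow> \<exists>w. hnn_word K Iset w \<and> word_eval G (\<lambda>x. x) w = g"
  using surj_aux word_eval_eq by blast

lemma main4: "hnn_word K Iset u \<Longrightarrow> hnn_word K Iset v \<Longrightarrow>
   (word_eval G (\<lambda>x. x) u = word_eval G (\<lambda>x. x) v \<longleftrightarrow> cong u v)"
proof -
  assume hu: "hnn_word K Iset u" and hv: "hnn_word K Iset v"
  have "word_eval G (\<lambda>x. x) u = seval u" "word_eval G (\<lambda>x. x) v = seval v"
    using word_eval_eq hu hv by auto
  then show ?thesis using eq_cong[OF hu hv] cong_seval by auto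
qed
end

theorem proposition3p5:
  fixes G :: "('g, 'b) monoid_scheme" and n :: nat
    and l :: "'g \<Rightarrow> nat \<Rightarrow> int" and \<delta> :: "nat \<Rightarrow> int"
  assumes "group G"
    and "torsion_free G"
    and "\<delta> \<in> zvec n" and "rlex_le (\<lambda>_. 0) \<delta>"
    and "length_function G n l"
    and "hyperbolic G l \<delta>"
    and "regular G l \<delta>"
    and A: "ht \<delta> = 1"
    and B: "\<forall>g\<in>carrier G. \<forall>m::int. m \<noteq> 0 \<and> rlex_less (l (g [^]\<^bsub>G\<^esub> m)) (l g)
              \<longrightarrow> ht (l g - l (g [^]\<^bsub>G\<^esub> m)) = 1"
    and C: "\<forall>g\<in>carrier G. g \<noteq> \<one>\<^bsub>G\<^esub> \<longrightarrow> rlex_less (\<lambda>_. 0) (l g)"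
    and k: "1 \<le> k" "k < n"
  shows "\<exists>(I :: 'g set) (h :: 'g \<Rightarrow> 'g).
     h ` I \<subseteq> Gk G l (Suc k) - Gk G l k \<and>
     (let Cs = (\<lambda>i. Gk G l k \<inter> {h i \<otimes>\<^bsub>G\<^esub> x \<otimes>\<^bsub>G\<^esub> inv\<^bsub>G\<^esub> (h i) | x. x \<in> Gk G l k});
          phi = (\<lambda>i c. inv\<^bsub>G\<^esub> (h i) \<otimes>\<^bsub>G\<^esub> c \<otimes>\<^bsub>G\<^esub> h i)
      in (\<forall>w. hnn_word (Gk G l k) I w \<longrightarrow> word_eval G h w \<in> Gk G l (Suc k)) \<and>
         (\<forall>g\<in>Gk G l (Suc k). \<exists>w. hnn_word (Gk G l k) I w \<and> word_eval G h w = g) \<and>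
         (\<forall>u v. hnn_word (Gk G l k) I u \<and> hnn_word (Gk G l k) I v \<longrightarrow>
              (word_eval G h u = word_eval G h v \<longleftrightarrow> hnn_cong G (Gk G l k) I Cs phi u v)))"
proof -
  have "P35 G n l \<delta> k" unfolding P35_def P35_axioms_def using assms by auto
  then interpret Q: P35 G n l \<delta> k .
  show ?thesis
    apply (rule exI[of _ Q.Iset], rule exI[of _ "\<lambda>x. x"])
    unfolding Let_def
    using Q.main1 Q.main2 Q.main3 Q.main4 by auto
qed

end
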